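(* Let $\mathbb{X},\mathbb{Y}$ be smooth real Banach spaces and let $T\in\mathbb{L}(\mathbb{X},\mathbb{Y})$ with $\operatorname{rank} T>1$ and $\|T\|=1$. Suppose $M_T\neq\emptyset$ and $x\in M_T$. Then $(x,Tx)$ is a weak CPP.
   Context: All Banach spaces are real and of dimension greater than $1$. $\mathbb{L}(\mathbb{X},\mathbb{Y})$ is the space of bounded linear operators with operator norm. $M_T=\{x\in S_{\mathbb{X}}:\|Tx\|=\|T\|\}$. $B(x,r)=\{u:\|u-x\|<r\}$. $x\perp_B y$ means $\|x+\lambda y\|\ge\|x\|$ for all real $\lambda$; $x^\perp=\{y: x\perp_B y\}$. For $x\in S_{\mathbb{X}}$, $y\in S_{\mathbb{Y}}$, $(x,y)$ is a weak CPP if there exist $z\in x^\perp\cap S_{\mathbb{X}}$, $w\in y^\perp\cap S_{\mathbb{Y}}$, $r>0$, $\mu>0$ such that for all $a,b\in\mathbb{R}$, $ax+bz\in B(x,r)\cap S_{\mathbb{X}}$ implies $\|ay+b\mu w\|\le1$. *)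

theory Defs
  imports "HOL-Analysis.Analysis"
begin

definition bj_orth :: "'a::real_normed_vector \<Rightarrow> 'a \<Rightarrow> bool" where
  "bj_orth x y \<longleftrightarrow> (\<forall>t::real. norm (x + t *\<^sub>R y) \<ge> norm x)"

definition smooth_space :: "'a::real_normed_vector itself \<Rightarrow> bool" where
  "smooth_space _ \<longleftrightarrow> (\<forall>x::'a. norm x = 1 \<longrightarrow>
      (\<exists>!f::'a \<Rightarrow> real. bounded_linear f \<and> onorm f = 1 \<and> f x = 1))"

definition dim_gt_one :: "'a::real_vector itself \<Rightarrow> bool" where
  "dim_gt_one _ \<longleftrightarrow> (\<exists>u v::'a. u \<noteq> v \<and> independent {u, v})"

definition rank_gt_one :: "('a::real_vector \<Rightarrow> 'b::real_vector) \<Rightarrow> bool" where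
  "rank_gt_one T \<longleftrightarrow> (\<exists>u v. u \<in> range T \<and> v \<in> range T \<and> u \<noteq> v \<and> independent {u, v})"

definition norm_attain_set :: "('a::real_normed_vector \<Rightarrow> 'b::real_normed_vector) \<Rightarrow> 'a set" where
  "norm_attain_set T = {x. norm x = 1 \<and> norm (T x) = onorm T}"

definition weak_CPP :: "'a::real_normed_vector \<Rightarrow> 'b::real_normed_vector \<Rightarrow> bool" where
  "weak_CPP x y \<longleftrightarrow> norm x = 1 \<and> norm y = 1 \<and>
     (\<exists>z w r \<mu>. bj_orth x z \<and> norm z = 1 \<and> bj_orth y w \<and> norm w = 1 \<and>
        r > 0 \<and> \<mu> > 0 \<and>
        (\<forall>a b::real. norm (a *\<^sub>R x + b *\<^sub>R z - x) < r \<and> norm (a *\<^sub>R x + b *\<^sub>R z) = 1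
            \<longrightarrow> norm (a *\<^sub>R y + (b * \<mu>) *\<^sub>R w) \<le> 1))"

end

theory Submission
  imports Defs
begin

theorem mainTheorem2:
  fixes T :: "'a::banach \<Rightarrow> 'b::banach" and x :: 'a
  assumes "dim_gt_one TYPE('a)" and "dim_gt_one TYPE('b)"
    and "smooth_space TYPE('a)" and "smooth_space TYPE('b)"
    and "bounded_linear T" and "rank_gt_one T" and "onorm T = 1"
    and "norm_attain_set T \<noteq> {}" and "x \<in> norm_attain_set T"
  shows "weak_CPP x (T x)"
proof -
  have bl: "bounded_linear T" by fact
  have nx: "norm x = 1" and nTx: "norm (T x) = 1"
    using assms(9) assms(7) by (auto simp: norm_attain_set_def)
  obtain f :: "'b \<Rightarrow> real" where fbl: "bounded_linear f" and fn: "onorm f = 1" and fTx: "f (T x) = 1"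
    using assms(4) nTx unfolding smooth_space_def by blast
  define g where "g = (\<lambda>y. f (T y))"
  have gbl: "bounded_linear g" unfolding g_def
    using bounded_linear_compose[OF fbl bl] by (simp add: o_def)
  have gle: "g y \<le> norm y" for y
  proof -
    have "g y \<le> \<bar>f (T y)\<bar>" unfolding g_def by simp
    also have "\<dots> \<le> onorm f * norm (T y)" using onorm[OF fbl] by simp
    also have "\<dots> \<le> 1 * (onorm T * norm y)" using fn onorm[OF bl] by simp
    finally show ?thesis using assms(7) by simp
  qed
  have fle: "f y \<le> norm y" for y
  proof -
    have "f y \<le> \<bar>f y\<bar>" by simp
    also have "\<dots> \<le> onorm f * norm y" using onorm[OF fbl] by simp
    finally show ?thesis using fn by simp
  qed
  have gx: "g x = 1" using fTx g_def by simp
  have "\<exists>z0. g z0 = 0 \<and> T z0 \<noteq> 0"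
  proof (rule ccontr)
    assume H: "\<not> ?thesis"
    have key: "T p = g p *\<^sub>R T x" for p
    proof -
      have "g (p - g p *\<^sub>R x) = 0"
        using gx by (simp add: linear_diff[OF bounded_linear.linear[OF gbl]]
            linear_scale[OF bounded_linear.linear[OF gbl]])
      then have "T (p - g p *\<^sub>R x) = 0" using H by blast
      then show ?thesis
        by (simp add: linear_diff[OF bounded_linear.linear[OF bl]]
            linear_scale[OF bounded_linear.linear[OF bl]])
    qed
    obtain u v where uv: "u \<in> range T" "v \<in> range T" "u \<noteq> v" "independent {u, v}"
      using assms(6) unfolding rank_gt_one_def by blast
    obtain p q where pq: "u = T p" "v = T q" using uv by blast
    show False
    proof (cases "g p = 0")
      case True
      have "u = 0" using key[of p] pq True by simp
      then show False using uv(4) dependent_zero by blast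
    next
      case False
      have "v = (g q / g p) *\<^sub>R u" using key[of p] key[of q] pq False by simp
      then have "v \<in> span ({u, v} - {v})" using uv(3)
        by (simp add: span_base span_mul insert_Diff_if)
      then show False using uv(4) unfolding dependent_def by blast
    qed
  qed
  then obtain z0 where z0: "g z0 = 0" "T z0 \<noteq> 0" by blast
  have z0ne: "z0 \<noteq> 0" using z0 bl linear_0 bounded_linear.linear by metis
  define z where "z = (1 / norm z0) *\<^sub>R z0"
  have nz: "norm z = 1" using z0ne z_def by simp
  have gz: "g z = 0" unfolding z_def using z0
    by (simp add: linear_scale[OF bounded_linear.linear[OF gbl]])
  have Tz: "T z = (1 / norm z0) *\<^sub>R T z0" unfolding z_def
    by (simp add: linear_scale[OF bounded_linear.linear[OF bl]])
  have Tzne: "T z \<noteq> 0" using Tz z0 z0ne by simp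
  define \<mu> where "\<mu> = norm (T z)"
  define w where "w = (1 / \<mu>) *\<^sub>R T z"
  have mu: "\<mu> > 0" using Tzne \<mu>_def by simp
  have nw: "norm w = 1" using mu w_def \<mu>_def by simp
  have ox: "bj_orth x z" unfolding bj_orth_def
  proof
    fix t :: real
    have "g (x + t *\<^sub>R z) = 1" using gx gz
      by (simp add: linear_add[OF bounded_linear.linear[OF gbl]]
          linear_scale[OF bounded_linear.linear[OF gbl]])
    then show "norm x \<le> norm (x + t *\<^sub>R z)" using gle[of "x + t *\<^sub>R z"] nx by simp
  qed
  have fTz: "f (T z) = 0" using gz g_def by simp
  have oy: "bj_orth (T x) w" unfolding bj_orth_def
  proof
    fix t :: real
    have "f (T x + t *\<^sub>R w) = 1" using fTx fTz w_def
      by (simp add: linear_add[OF bounded_linear.linear[OF fbl]]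
          linear_scale[OF bounded_linear.linear[OF fbl]])
    then show "norm (T x) \<le> norm (T x + t *\<^sub>R w)" using fle[of "T x + t *\<^sub>R w"] nTx by simp
  qed
  have main: "norm (a *\<^sub>R T x + (b * \<mu>) *\<^sub>R w) \<le> 1"
    if "norm (a *\<^sub>R x + b *\<^sub>R z) = 1" for a b :: real
  proof -
    have "(b * \<mu>) *\<^sub>R w = b *\<^sub>R T z" using mu w_def by simp
    then have "a *\<^sub>R T x + (b * \<mu>) *\<^sub>R w = T (a *\<^sub>R x + b *\<^sub>R z)"
      by (simp add: linear_add[OF bounded_linear.linear[OF bl]]
          linear_scale[OF bounded_linear.linear[OF bl]])
    then show ?thesis using onorm[OF bl, of "a *\<^sub>R x + b *\<^sub>R z"] that assms(7) by simp
  qed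
  show ?thesis unfolding weak_CPP_def
    using nx nTx ox nz oy nw mu main
    by (intro conjI exI[of _ z] exI[of _ w] exI[of _ 1] exI[of _ \<mu>]) auto
qed

end
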